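(* Let $S\subsetneq\mathbb{S}$ (possibly empty) and for $q\in(0,1)$ write $v_i(q)=V(qe^{\theta_i-1})$ for $i\in S$. Define $$F_S(q)=-\log q+\sum_{i\in S}\frac{v_i(q)}{1-v_i(q)}+\frac{1-q-\sum_{i\in S}v_i(q)}{q+\sum_{i\in S}v_i(q)}.$$ Then $F_S$ is strictly decreasing on $(0,\bar q_0(S)]$.
   Context: Sellers $\mathbb{S}=\{1,\dots,n\}$ with product qualities $\theta_i\ge0$. $V:(0,\infty)\to(0,1)$ is defined by $V(x)=$ the unique $v\in(0,1)$ with $v\exp(v/(1-v))=x$. For nonempty $S\subseteq\mathbb{S}$, $\bar q_0(S)\in(0,1)$ is the unique solution of $\sum_{i\in S}V(\bar q_0e^{\theta_i-1})=1-\bar q_0$; $\bar q_0(\emptyset)=1$. (For $j\notin S$, $F_S(\bar q_0(S\cup\{j\}))$ equals the Bertrand equilibrium social welfare when $S\cup\{j\}$ is displayed, and $F_S(\bar q_0(S))$ equals that when $S$ is displayed.) *)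

theory Defs
  imports Complex_Main
begin

definition V :: "real \<Rightarrow> real" where
  "V x = (THE v. 0 < v \<and> v < 1 \<and> v * exp (v / (1 - v)) = x)"

definition qbar0 :: "(nat \<Rightarrow> real) \<Rightarrow> nat set \<Rightarrow> real" where
  "qbar0 \<theta> S = (if S = {} then 1 else
     (THE q. 0 < q \<and> q < 1 \<and> (\<Sum>i\<in>S. V (q * exp (\<theta> i - 1))) = 1 - q))"

definition vq :: "(nat \<Rightarrow> real) \<Rightarrow> nat \<Rightarrow> real \<Rightarrow> real" where
  "vq \<theta> i q = V (q * exp (\<theta> i - 1))"

definition F :: "(nat \<Rightarrow> real) \<Rightarrow> nat set \<Rightarrow> real \<Rightarrow> real" where
  "F \<theta> S q = - ln q + (\<Sum>i\<in>S. vq \<theta> i q / (1 - vq \<theta> i q))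
     + (1 - q - (\<Sum>i\<in>S. vq \<theta> i q)) / (q + (\<Sum>i\<in>S. vq \<theta> i q))"

end

theory Submission
  imports Defs
begin


definition gg :: "real \<Rightarrow> real" where "gg v = v * exp (v / (1 - v))"

lemma gg_strict: assumes "0 \<le> a" "a < b" "b < 1" shows "gg a < gg b"
proof -
  have "a/(1-a) \<le> b/(1-b)" using assms by (simp add: frac_le)
  hence "exp (a/(1-a)) \<le> exp (b/(1-b))" by simp
  hence "a * exp (a/(1-a)) \<le> a * exp (b/(1-b))" using assms by (simp add: mult_left_mono)
  also have "\<dots> < b * exp (b/(1-b))" using assms by simp
  finally show ?thesis unfolding gg_def .
qed

lemma gg_ge: assumes "0 \<le> v" "v < 1" shows "v/(1-v) \<le> gg v"
proof -
  have "1 + v/(1-v) \<le> exp (v/(1-v))" by (rule exp_ge_add_one_self)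
  hence "v * (1 + v/(1-v)) \<le> v * exp (v/(1-v))" using assms by (simp add: mult_left_mono)
  moreover have "v * (1 + v/(1-v)) = v/(1-v)" using assms by (simp add: field_simps)
  ultimately show ?thesis unfolding gg_def by simp
qed

lemma gg_ge2: assumes "0 \<le> v" "v < 1" shows "v \<le> gg v"
  using assms unfolding gg_def by (simp add: mult_le_cancel_left1 order.strict_iff_not)

lemma gg_cont: "continuous_on {0..b} gg" if "b < 1" for b
  unfolding gg_def using that by (intro continuous_intros) auto

lemma V_ex: assumes "x > 0" shows "\<exists>v. 0 < v \<and> v < 1 \<and> gg v = x"
proof -
  define b where "b = (x+1)/(x+2)"
  have b: "0 \<le> b" "b < 1" using assms by (auto simp: b_def field_simps)
  have "b/(1-b) = x + 1" using assms by (simp add: b_def field_simps)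
  hence "x \<le> gg b" using gg_ge[OF b] by simp
  moreover have "gg 0 \<le> x" using assms by (simp add: gg_def)
  ultimately obtain v where v: "0 \<le> v" "v \<le> b" "gg v = x"
    using IVT'[of gg 0 x b] gg_cont[OF b(2)] b by auto
  have "v \<noteq> 0" using v assms by (auto simp: gg_def)
  thus ?thesis using v b by (intro exI[of _ v]) auto
qed

lemma V_prop: assumes "x > 0" shows "0 < V x \<and> V x < 1 \<and> gg (V x) = x"
proof -
  have "\<exists>!v. 0 < v \<and> v < 1 \<and> v * exp (v / (1 - v)) = x"
  proof (rule ex_ex1I)
    show "\<exists>v. 0 < v \<and> v < 1 \<and> v * exp (v / (1 - v)) = x" using V_ex[OF assms] by (simp add: gg_def)
  next
    fix u w assume "0 < u \<and> u < 1 \<and> u * exp (u / (1 - u)) = x" "0 < w \<and> w < 1 \<and> w * exp (w / (1 - w)) = x"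
    thus "u = w" using gg_strict[of u w] gg_strict[of w u] unfolding gg_def
      by (metis less_le not_less_iff_gr_or_eq)
  qed
  from theI'[OF this] show ?thesis unfolding V_def gg_def by blast
qed

lemma V_gg: assumes "0 < v" "v < 1" shows "V (gg v) = v"
proof -
  have "gg v > 0" using assms by (simp add: gg_def)
  from V_prop[OF this] have "0 < V (gg v)" "V (gg v) < 1" "gg (V (gg v)) = gg v" by auto
  thus ?thesis using gg_strict[of v "V (gg v)"] gg_strict[of "V (gg v)" v] assms
    by (metis less_le not_less_iff_gr_or_eq)
qed

lemma V_mono: assumes "0 < x" "x < y" shows "V x < V y"
proof -
  have "0 < y" using assms by simp
  from V_prop[OF assms(1)] V_prop[OF this] assms show ?thesis
    using gg_strict[of "V y" "V x"] by (metis less_le not_le)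
qed

lemma V_le: assumes "0 < x" shows "V x \<le> x"
  using V_prop[OF assms] gg_ge2[of "V x"] by auto

definition ggd :: "real \<Rightarrow> real" where "ggd v = exp (v/(1-v)) * (1 + v/(1-v)^2)"

lemma gg_deriv: assumes "v < 1" shows "(gg has_real_derivative ggd v) (at v)"
  unfolding gg_def ggd_def using assms
  by (auto intro!: derivative_eq_intros simp: field_simps power2_eq_square)

lemma V_deriv: assumes "x > 0" shows "(V has_real_derivative inverse (ggd (V x))) (at x)"
proof -
  from V_prop[OF assms] have p: "0 < V x" "V x < 1" "gg (V x) = x" by auto
  have cont: "isCont V x"
  proof -
    have "isCont V (gg (V x))"
      apply (rule isCont_inverse_function2[where f=gg and g=V and x="V x" and a="V x / 2" and b = "(1 + V x)/2"])
      using p by (auto intro!: V_gg DERIV_isCont[OF gg_deriv])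
    thus ?thesis using p by simp
  qed
  have "ggd (V x) > 0" using p by (simp add: ggd_def add_pos_nonneg)
  show ?thesis
    apply (rule DERIV_inverse_function[where f=gg and a=0 and b="x+1"])
    using p assms \<open>ggd (V x) > 0\<close> cont by (auto intro!: gg_deriv V_prop[THEN conjunct2, THEN conjunct2])
qed



definition hh :: "real \<Rightarrow> real" where "hh y = y*(1+y)/(1-y+y^2)"
definition ww :: "real \<Rightarrow> real" where "ww v = v/((1-v)^2+v)"

lemma Qpos: "1 - y + y^2 > (0::real)"
proof -
  have "1 - y + y^2 = (y - 1/2)^2 + 3/4" by (simp add: power2_eq_square field_simps)
  moreover have "(y - 1/2)^2 \<ge> 0" by simp
  ultimately show ?thesis by linarith
qed

lemma Ppos: "(1-v)^2 + v > (0::real)"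
  using Qpos[of v] by (simp add: power2_eq_square field_simps)

lemma item: fixes y T :: real assumes "0<y" "y<1" "0<T" "T\<le>1"
  shows "ww (T*y) * (1 + T*y/T^2) \<le> (1+T)/(2*T) * hh y"
proof -
  define P where "P = (1-T*y)^2 + T*y"
  define Q where "Q = 1 - y + y^2"
  have P: "P > 0" unfolding P_def by (rule Ppos)
  have Q: "Q > 0" unfolding Q_def by (rule Qpos)
  have L1: "1 + T*y/T^2 = (T+y)/T" using assms by (simp add: field_simps power2_eq_square)
  have L2: "ww (T*y) = T*y/P" unfolding ww_def P_def by simp
  have L: "ww (T*y) * (1 + T*y/T^2) = y*(T+y)/P"
    unfolding L1 L2 using assms P by (simp add: field_simps)
  have R: "(1+T)/(2*T) * hh y = (1+T)*y*(1+y)/(2*T*Q)"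
    using assms Q unfolding hh_def Q_def by (simp add: field_simps)
  define e where "e = (1-T)*(1+y) + T*(3-3*y^3) + T*(1-T)*(y^2+y^3)"
  have e: "e \<ge> 0" unfolding e_def using assms
    by (intro add_nonneg_nonneg mult_nonneg_nonneg) (auto simp: power_le_one)
  have d: "(1+T)*(1+y)*P - 2*T*(T+y)*Q = (1-T)*e"
    unfolding P_def Q_def e_def by (simp add: algebra_simps power2_eq_square power3_eq_cube)
  have "2*T*(T+y)*Q \<le> (1+T)*(1+y)*P" using d e assms by (smt (verit) mult_nonneg_nonneg)
  hence "y*(2*T*(T+y)*Q) \<le> y*((1+T)*(1+y)*P)" using assms by (simp add: mult_left_mono)
  hence "y*(T+y)/P \<le> (1+T)*y*(1+y)/(2*T*Q)" using P Q assms
    by (simp add: divide_simps algebra_simps)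
  thus ?thesis using L R by simp
qed

lemma hh_small: "0 \<le> y \<Longrightarrow> y \<le> 1/2 \<Longrightarrow> hh y \<le> 2*y"
proof -
  assume a: "0 \<le> y" "y \<le> 1/2"
  have "0 \<le> (1-2*y)*(1-y)" using a by simp
  hence "(1+y) \<le> 2*(1-y+y^2)" by (simp add: algebra_simps power2_eq_square)
  hence "y*(1+y) \<le> y*(2*(1-y+y^2))" using a by (simp add: mult_left_mono)
  thus ?thesis unfolding hh_def using Qpos[of y] by (simp add: divide_simps algebra_simps)
qed

lemma pp_mono: fixes a b :: real assumes "0<a" "a\<le>b" "b\<le>1/2"
  shows "hh a \<le> a * ((1+b)/(1-b+b^2))"
proof -
  have "a*b \<le> (1/2)*(1/2)" using assms by (intro mult_mono) auto
  hence "0 \<le> (b-a)*(2-a-b-a*b)" using assms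
    by (intro mult_nonneg_nonneg) auto
  hence "(1+a)*(1-b+b^2) \<le> (1+b)*(1-a+a^2)" by (simp add: algebra_simps power2_eq_square)
  hence "(1+a)/(1-a+a^2) \<le> (1+b)/(1-b+b^2)" using Qpos[of a] Qpos[of b] by (simp add: divide_simps)
  hence "a*((1+a)/(1-a+a^2)) \<le> a*((1+b)/(1-b+b^2))" using assms by (intro mult_left_mono) auto
  moreover have "hh a = a*((1+a)/(1-a+a^2))" unfolding hh_def by simp
  ultimately show ?thesis by linarith
qed

lemma hh_strict: fixes a b :: real assumes "0\<le>a" "a<b" "b\<le>1" shows "hh a < hh b"
proof -
  have ab: "a*b \<le> a" "a*b \<le> b" using assms mult_left_mono[of b 1 a] mult_right_mono[of a 1 b] by auto
  have "0 < (b-a)*(1+a+b-2*a*b)" using assms ab by (intro mult_pos_pos) auto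
  hence "(a+a^2)*(1-b+b^2) < (b+b^2)*(1-a+a^2)" by (simp add: algebra_simps power2_eq_square)
  thus ?thesis unfolding hh_def using Qpos[of a] Qpos[of b] by (simp add: divide_simps algebra_simps power2_eq_square)
qed

lemma hh_pair: "hh y + hh (1-y) = 2"
proof -
  define Q where "Q = 1 - y + y^2"
  have Q: "Q > 0" unfolding Q_def by (rule Qpos)
  have "1 - (1-y) + (1-y)^2 = Q" unfolding Q_def by (simp add: power2_eq_square algebra_simps)
  hence "hh y + hh (1-y) = (y*(1+y) + (1-y)*(1+(1-y)))/Q" unfolding hh_def Q_def by (simp add: add_divide_distrib)
  also have "y*(1+y) + (1-y)*(1+(1-y)) = 2*Q" unfolding Q_def by (simp add: algebra_simps power2_eq_square)
  finally show ?thesis using Q by simp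
qed

lemma claim2: fixes S :: "'a set" and y :: "'a \<Rightarrow> real" assumes "finite S" "\<And>i. i \<in> S \<Longrightarrow> 0 < y i" "(\<Sum>i\<in>S. y i) < 1"
  shows "(\<Sum>i\<in>S. hh (y i)) < 2"
proof (cases "\<forall>i\<in>S. y i \<le> 1/2")
  case True
  have "(\<Sum>i\<in>S. hh (y i)) \<le> (\<Sum>i\<in>S. 2 * y i)"
    using True assms(2) by (intro sum_mono hh_small) (auto simp: less_imp_le)
  also have "\<dots> < 2" using assms(3) by (simp add: sum_distrib_left[symmetric])
  finally show ?thesis .
next
  case False
  then obtain j where j: "j \<in> S" "y j > 1/2" by auto
  define R where "R = S - {j}"
  define r where "r = (\<Sum>i\<in>R. y i)"
  have split: "(\<Sum>i\<in>S. f i) = f j + (\<Sum>i\<in>R. f i)" for f :: "'a \<Rightarrow> real"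
    unfolding R_def using j assms(1) by (simp add: sum.remove)
  have r: "r < 1 - y j" using split[of y] assms(3) unfolding r_def by simp
  have r0: "0 \<le> r" unfolding r_def by (intro sum_nonneg) (auto simp: R_def intro: less_imp_le assms(2))
  have yi: "y i \<le> r" if "i \<in> R" for i
    unfolding r_def using that assms by (intro member_le_sum) (auto simp: R_def less_imp_le)
  have "(\<Sum>i\<in>R. hh (y i)) \<le> (\<Sum>i\<in>R. y i * ((1+r)/(1-r+r^2)))"
    using yi r j assms(2) by (intro sum_mono pp_mono) (auto simp: R_def)
  also have "\<dots> = (\<Sum>i\<in>R. y i) * ((1+r)/(1-r+r^2))" by (rule sum_distrib_right[symmetric])
  also have "\<dots> = hh r" unfolding hh_def r_def by simp
  also have "\<dots> < hh (1 - y j)" using r r0 j by (intro hh_strict) auto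
  finally show ?thesis using split[of "\<lambda>i. hh (y i)"] hh_pair[of "y j"] by simp
qed

lemma key: fixes S :: "'a set" and v :: "'a \<Rightarrow> real" assumes "finite S" "\<And>i. i \<in> S \<Longrightarrow> 0 < v i \<and> v i < 1" "q > 0"
  "T = q + (\<Sum>i\<in>S. v i)" "T \<le> 1"
  shows "(\<Sum>i\<in>S. ww (v i) * (1 + v i / T^2)) < 1 + 1/T"
proof -
  have T0: "T > 0" using assms by (smt (verit) sum_nonneg)
  have "(\<Sum>i\<in>S. ww (v i) * (1 + v i / T^2)) \<le> (\<Sum>i\<in>S. (1+T)/(2*T) * hh (v i / T))"
  proof (rule sum_mono)
    fix i assume i: "i \<in> S"
    have vT: "v i < T"
    proof -
      have "v i \<le> (\<Sum>i\<in>S. v i)" using i assms by (intro member_le_sum) (auto simp: less_imp_le)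
      thus ?thesis using assms by simp
    qed
    have "ww (T*(v i/T)) * (1 + T*(v i/T)/T^2) \<le> (1+T)/(2*T) * hh (v i/T)"
      using assms(2)[OF i] T0 vT assms(5) by (intro item) auto
    thus "ww (v i) * (1 + v i / T^2) \<le> (1+T)/(2*T) * hh (v i / T)" using T0 by simp
  qed
  also have "\<dots> = (1+T)/(2*T) * (\<Sum>i\<in>S. hh (v i / T))" by (simp add: sum_distrib_left)
  also have "\<dots> < (1+T)/(2*T) * 2"
  proof (rule mult_strict_left_mono)
    have "(\<Sum>i\<in>S. v i / T) = (\<Sum>i\<in>S. v i) / T" by (simp add: sum_divide_distrib)
    also have "\<dots> < 1" using T0 assms by simp
    finally show "(\<Sum>i\<in>S. hh (v i / T)) < 2" using assms T0 by (intro claim2) auto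
    show "0 < (1+T)/(2*T)" using T0 by simp
  qed
  also have "\<dots> = 1 + 1/T" using T0 by (simp add: field_simps)
  finally show ?thesis .
qed



definition uu :: "real \<Rightarrow> real" where "uu v = v*(1-v)^2/((1-v)^2+v)"

lemma vq_prop: assumes "q > 0" shows "0 < vq \<theta> i q \<and> vq \<theta> i q < 1 \<and> gg (vq \<theta> i q) = q * exp (\<theta> i - 1)"
  unfolding vq_def using assms by (intro V_prop) simp

lemma vq_deriv: assumes "q > 0" shows "(vq \<theta> i has_real_derivative uu (vq \<theta> i q) / q) (at q)"
proof -
  define c where "c = exp (\<theta> i - 1)"
  define v where "v = vq \<theta> i q"
  have c: "c > 0" unfolding c_def by simp
  have v: "0 < v" "v < 1" "v * exp (v/(1-v)) = q * c"
    using vq_prop[OF assms, of \<theta> i] unfolding v_def c_def gg_def by auto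
  have d1: "(V has_real_derivative inverse (ggd v)) (at (q*c))"
    unfolding v_def vq_def c_def using V_deriv assms by simp
  have d2: "((\<lambda>q. q*c) has_real_derivative c) (at q)" by (auto intro!: derivative_eq_intros)
  have "((\<lambda>q. V (q*c)) has_real_derivative inverse (ggd v) * c) (at q)"
    using DERIV_chain2[where f=V and g="\<lambda>q. q*c", OF d1 d2] by simp
  moreover have "inverse (ggd v) * c = uu v / q"
  proof -
    define E where "E = exp (v/(1-v))"
    have E: "E = q*c/v" using v unfolding E_def by (simp add: field_simps)
    have P: "(1-v)^2 + v > 0" by (rule Ppos)
    have s: "(1-v)^2 > 0" using v by simp
    define W where "W = (1-v)^2+v"
    define S2 where "S2 = (1-v)^2"
    have G: "ggd v = q*c*W/(v*S2)" unfolding ggd_def E_def[symmetric] E W_def S2_def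
      using v s by (simp add: field_simps)
    have "inverse (q*c*W/(v*S2)) * c = (v*S2)/(q*W)"
      using v c assms P s unfolding W_def[symmetric] S2_def[symmetric] by (simp add: field_simps)
    thus ?thesis unfolding uu_def G W_def S2_def by simp
  qed
  ultimately show ?thesis unfolding v_def vq_def c_def by (simp add: fun_eq_iff)
qed

definition TT :: "(nat \<Rightarrow> real) \<Rightarrow> nat set \<Rightarrow> real \<Rightarrow> real" where
  "TT \<theta> S q = q + (\<Sum>i\<in>S. vq \<theta> i q)"

lemma TT_deriv: assumes "q > 0" shows "(TT \<theta> S has_real_derivative 1 + (\<Sum>i\<in>S. uu (vq \<theta> i q) / q)) (at q)"
  unfolding TT_def by (intro derivative_intros vq_deriv assms)

lemma TT_mono: assumes "0 < a" "a < b" "finite S" shows "TT \<theta> S a < TT \<theta> S b"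
proof -
  have "(\<Sum>i\<in>S. vq \<theta> i a) \<le> (\<Sum>i\<in>S. vq \<theta> i b)"
    using assms unfolding vq_def by (intro sum_mono less_imp_le V_mono) auto
  thus ?thesis unfolding TT_def using assms by simp
qed

definition FD :: "(nat \<Rightarrow> real) \<Rightarrow> nat set \<Rightarrow> real \<Rightarrow> real" where
  "FD \<theta> S q = - (1/q) + (\<Sum>i\<in>S. (uu (vq \<theta> i q) / q) / (1 - vq \<theta> i q)^2)
     + ((- (1 + (\<Sum>i\<in>S. uu (vq \<theta> i q) / q))) * (q + (\<Sum>i\<in>S. vq \<theta> i q))
        - (1 - q - (\<Sum>i\<in>S. vq \<theta> i q)) * (1 + (\<Sum>i\<in>S. uu (vq \<theta> i q) / q)))
       / ((q + (\<Sum>i\<in>S. vq \<theta> i q)) * (q + (\<Sum>i\<in>S. vq \<theta> i q)))"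

lemma F_deriv: assumes "q > 0" "finite S" shows "(F \<theta> S has_real_derivative FD \<theta> S q) (at q)"
proof -
  have pos: "q + (\<Sum>i\<in>S. vq \<theta> i q) > 0"
    using assms vq_prop[OF assms(1)] by (smt (verit) sum_nonneg)
  have d1: "((\<lambda>q. vq \<theta> i q / (1 - vq \<theta> i q)) has_real_derivative (uu (vq \<theta> i q) / q) / (1 - vq \<theta> i q)^2) (at q)" for i
  proof -
    define v where "v = vq \<theta> i q"
    define a where "a = uu v / q"
    have "v < 1" using vq_prop[OF assms(1)] unfolding v_def by blast
    have dv: "(vq \<theta> i has_real_derivative a) (at q)" unfolding a_def v_def by (rule vq_deriv[OF assms(1)])
    have "((\<lambda>q. vq \<theta> i q / (1 - vq \<theta> i q)) has_real_derivative (a * (1 - v) - v * (0 - a)) / ((1-v)*(1-v))) (at q)"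
      using DERIV_divide[OF dv DERIV_diff[OF DERIV_const dv]] \<open>v < 1\<close> unfolding v_def by simp
    moreover have "(a * (1 - v) - v * (0 - a)) / ((1-v)*(1-v)) = a / (1-v)^2"
      by (simp add: algebra_simps power2_eq_square)
    ultimately show ?thesis unfolding a_def v_def by simp
  qed
  define U where "U = (\<Sum>i\<in>S. uu (vq \<theta> i q) / q)"
  have dA: "((\<lambda>x. \<Sum>i\<in>S. vq \<theta> i x / (1 - vq \<theta> i x)) has_real_derivative
     (\<Sum>i\<in>S. (uu (vq \<theta> i q) / q) / (1 - vq \<theta> i q)^2)) (at q)"
    by (rule DERIV_sum) (rule d1)
  have ds: "((\<lambda>x. \<Sum>i\<in>S. vq \<theta> i x) has_real_derivative U) (at q)"
    unfolding U_def by (rule DERIV_sum) (rule vq_deriv[OF assms(1)])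
  have dnum: "((\<lambda>x. 1 - x - (\<Sum>i\<in>S. vq \<theta> i x)) has_real_derivative (0 - 1) - U) (at q)"
    by (intro DERIV_diff DERIV_const DERIV_ident ds)
  have dden: "((\<lambda>x. x + (\<Sum>i\<in>S. vq \<theta> i x)) has_real_derivative 1 + U) (at q)"
    by (intro DERIV_add DERIV_ident ds)
  have dq: "((\<lambda>x. (1 - x - (\<Sum>i\<in>S. vq \<theta> i x)) / (x + (\<Sum>i\<in>S. vq \<theta> i x))) has_real_derivative
     (((0 - 1) - U) * (q + (\<Sum>i\<in>S. vq \<theta> i q)) - (1 - q - (\<Sum>i\<in>S. vq \<theta> i q)) * (1 + U))
      / ((q + (\<Sum>i\<in>S. vq \<theta> i q)) * (q + (\<Sum>i\<in>S. vq \<theta> i q)))) (at q)"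
    using DERIV_divide[OF dnum dden] pos by simp
  have dl: "((\<lambda>x. - ln x) has_real_derivative - (1/q)) (at q)"
    by (intro DERIV_minus DERIV_ln_divide assms)
  have "((\<lambda>x. - ln x + (\<Sum>i\<in>S. vq \<theta> i x / (1 - vq \<theta> i x))
     + (1 - x - (\<Sum>i\<in>S. vq \<theta> i x)) / (x + (\<Sum>i\<in>S. vq \<theta> i x))) has_real_derivative FD \<theta> S q) (at q)"
    using DERIV_add[OF DERIV_add[OF dl dA] dq] unfolding FD_def U_def by simp
  thus ?thesis unfolding F_def[abs_def] .
qed



lemma uu_ww: assumes "0 < v" "v < 1" shows "uu v / (1-v)^2 = ww v" "uu v = v - v * ww v"
proof -
  have P: "(1-v)^2 + v > 0" by (rule Ppos)
  have s: "(1-v)^2 > 0" using assms by simp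
  have gen: "s2 > 0 \<Longrightarrow> v*s2/P/s2 = v/P" for s2 P :: real by simp
  show "uu v / (1-v)^2 = ww v" unfolding uu_def ww_def using gen[OF s] .
  have "v - v * (v / ((1-v)^2 + v)) = v * (((1-v)^2 + v) - v) / ((1-v)^2 + v)"
    using P by (simp add: field_simps)
  thus "uu v = v - v * ww v" unfolding uu_def ww_def by simp
qed

lemma FD_neg: assumes "q > 0" "finite S" "TT \<theta> S q \<le> 1" shows "FD \<theta> S q < 0"
proof -
  define v where "v i = vq \<theta> i q" for i
  define T where "T = TT \<theta> S q"
  define s where "s = (\<Sum>i\<in>S. v i)"
  define W where "W = (\<Sum>i\<in>S. ww (v i))"
  define X where "X = (\<Sum>i\<in>S. v i * ww (v i))"
  define U where "U = (\<Sum>i\<in>S. uu (v i) / q)"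
  have vp: "0 < v i \<and> v i < 1" for i using vq_prop[OF assms(1)] unfolding v_def by blast
  have Ts: "T = q + s" unfolding T_def TT_def s_def v_def by simp
  have T0: "T > 0" using Ts assms vp unfolding s_def by (smt (verit) sum_nonneg)
  have h1: "(\<Sum>i\<in>S. (uu (v i) / q) / (1 - v i)^2) = W / q"
    unfolding W_def sum_divide_distrib
  proof (rule sum.cong)
    fix x
    have "(uu (v x) / q) / (1 - v x)^2 = (uu (v x) / (1 - v x)^2) / q" by simp
    thus "(uu (v x) / q) / (1 - v x)^2 = ww (v x) / q"
      using uu_ww(1)[OF vp[THEN conjunct1] vp[THEN conjunct2]] by simp
  qed simp
  have h2: "U = (s - X) / q"
    unfolding U_def s_def X_def sum_divide_distrib sum_subtractf[symmetric]
    using uu_ww(2)[OF vp[THEN conjunct1] vp[THEN conjunct2]] by simp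
  have FDe: "FD \<theta> S q = - (1/q) + W/q + ((- (1 + U)) * T - (1 - T) * (1 + U)) / (T * T)"
    unfolding FD_def h1[unfolded v_def] U_def[unfolded v_def] Ts s_def v_def by (simp add: algebra_simps)
  have e3: "((- (1 + U)) * T - (1 - T) * (1 + U)) / (T * T) = - (1 + U) / T^2"
    by (simp add: algebra_simps power2_eq_square)
  have qU: "q * U = s - X" unfolding h2 using assms by simp
  have "q * FD \<theta> S q = q * (- (1/q)) + q * (W/q) - (q + q * U) / T^2"
    unfolding FDe e3 by (simp add: algebra_simps add_divide_distrib diff_divide_distrib)
  also have "\<dots> = -1 + W - (q + s - X) / T^2" unfolding qU using assms by simp
  also have "\<dots> = -1 - 1/T + (W + X / T^2)"
    unfolding Ts[symmetric] using T0 by (simp add: field_simps power2_eq_square)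
  also have "W + X / T^2 = (\<Sum>i\<in>S. ww (v i) * (1 + v i / T^2))"
    unfolding W_def X_def by (simp add: algebra_simps sum.distrib sum_divide_distrib)
  also have "\<dots> < 1 + 1/T"
    using key[of S v q T] assms vp Ts s_def T_def by auto
  finally have "q * FD \<theta> S q < 0" by simp
  thus ?thesis using assms by (simp add: mult_less_0_iff)
qed



lemma TT_cont: "continuous_on {a..b} (TT \<theta> S)" if "0 < a" for a b
  using that by (intro continuous_at_imp_continuous_on ballI DERIV_isCont[OF TT_deriv]) auto

lemma qbar_le: assumes "finite S" "0 < q" "q \<le> qbar0 \<theta> S" shows "TT \<theta> S q \<le> 1"
proof (cases "S = {}")
  case True
  thus ?thesis using assms by (simp add: TT_def qbar0_def)
next
  case False
  define C where "C = (\<Sum>i\<in>S. exp (\<theta> i - 1))"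
  have C0: "C \<ge> 0" unfolding C_def by (intro sum_nonneg) simp
  define q0 where "q0 = 1 / (2 + C)"
  have q0: "0 < q0" "q0 < 1" using C0 unfolding q0_def by auto
  have "(\<Sum>i\<in>S. vq \<theta> i q0) \<le> (\<Sum>i\<in>S. q0 * exp (\<theta> i - 1))"
    unfolding vq_def using q0 by (intro sum_mono V_le) simp
  also have "\<dots> = q0 * C" unfolding C_def by (simp add: sum_distrib_left)
  finally have "TT \<theta> S q0 \<le> q0 * (1 + C)" unfolding TT_def by (simp add: algebra_simps)
  also have "\<dots> < 1" using C0 unfolding q0_def by (simp add: field_simps)
  finally have a: "TT \<theta> S q0 < 1" .
  obtain j where j: "j \<in> S" using False by auto
  have "0 < (\<Sum>i\<in>S. vq \<theta> i 1)"
    using assms j False vq_prop[of 1] by (intro sum_pos) auto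
  hence b: "TT \<theta> S 1 > 1" unfolding TT_def by simp
  obtain q1 where q1: "q0 \<le> q1" "q1 \<le> 1" "TT \<theta> S q1 = 1"
    using IVT'[of "TT \<theta> S" q0 1 1] a b q0 TT_cont[OF q0(1)] by auto
  have q1': "0 < q1" "q1 < 1" using q1 q0 b by (auto simp: le_less)
  have uniq: "q = q1" if "0 < q" "TT \<theta> S q = 1" for q
    using TT_mono[OF that(1) _ assms(1), of q1 \<theta>] TT_mono[OF q1'(1) _ assms(1), of q \<theta>] that q1
    by (metis linorder_neqE_linordered_idom order.irrefl)
  have "(THE q. 0 < q \<and> q < 1 \<and> (\<Sum>i\<in>S. V (q * exp (\<theta> i - 1))) = 1 - q) = q1"
  proof (rule the_equality)
    show "0 < q1 \<and> q1 < 1 \<and> (\<Sum>i\<in>S. V (q1 * exp (\<theta> i - 1))) = 1 - q1"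
      using q1 q1' unfolding TT_def vq_def by simp
    fix q assume "0 < q \<and> q < 1 \<and> (\<Sum>i\<in>S. V (q * exp (\<theta> i - 1))) = 1 - q"
    thus "q = q1" using uniq unfolding TT_def vq_def by simp
  qed
  hence "qbar0 \<theta> S = q1" unfolding qbar0_def using False by simp
  thus ?thesis using assms q1 TT_mono[OF assms(2) _ assms(1), of q1 \<theta>] by (cases "q = q1") auto
qed

theorem lemma3:
  fixes n :: nat and \<theta> :: "nat \<Rightarrow> real" and S :: "nat set"
  assumes "\<And>i. i \<in> {1..n} \<Longrightarrow> \<theta> i \<ge> 0"
    and "S \<subset> {1..n}"
  shows "strict_antimono_on {0<..qbar0 \<theta> S} (F \<theta> S)"
proof (rule monotone_onI)
  have fin: "finite S" using assms(2) by (meson finite_atLeastAtMost finite_subset psubset_imp_subset)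
  fix x y assume xy: "x \<in> {0<..qbar0 \<theta> S}" "y \<in> {0<..qbar0 \<theta> S}" "x < y"
  have "F \<theta> S x > F \<theta> S y"
  proof (rule DERIV_neg_imp_decreasing[OF xy(3)])
    fix z assume z: "x \<le> z" "z \<le> y"
    have z0: "0 < z" using z xy by auto
    have "TT \<theta> S z \<le> 1" using qbar_le[OF fin z0] z xy by auto
    thus "\<exists>D. (F \<theta> S has_real_derivative D) (at z) \<and> D < 0"
      using F_deriv[OF z0 fin] FD_neg[OF z0 fin] by blast
  qed
  thus "F \<theta> S y < F \<theta> S x" .
qed

end
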